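(* Let $w_g$ be the number of weakly admissible compositions of $g$ whose maximal part is at least $6$. Then $\limsup_{g\to\infty}w_g^{1/g}<\omega=\frac{1+\sqrt5}2$. In particular, the number of NSG-compositions of genus $g$ with maximum at least $6$ has growth-rate strictly smaller than $\omega$.
   Context: A composition $x_1+\cdots+x_{m-1}$ with last maximal part $x_l$ (i.e. $x_1,\dots,x_{l-1}\le x_l$ and $x_{l+1},\dots,x_{m-1}<x_l$) is weakly admissible if $x_l\le x_i+x_{l-i}$ for $1\le i\le l-1$ and $x_l\le 1+x_{l+i}+x_{m-i}$ for $1\le i\le m-1-l$. An NSG-composition is a composition $x_1+\cdots+x_{m-1}$ satisfying $x_{s+t}\le x_s+x_t$ and $x_{m-s-t}\le x_{m-s}+x_{m-t}+1$ for all $s,t\ge1$, $s+t<m$ (equivalently, the Kunz vector $x_j=\#((\mathbb N\setminus S)\cap(j+m\mathbb Z))$ of a numerical semigroup $S$ of multiplicity $m$); its genus is $\sum x_j$. The growth-rate of a family of compositions is $\limsup_{g\to\infty}a_g^{1/g}$ where $a_g$ is the number of members of genus (sum) $g$. *)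

theory Defs
  imports Complex_Main "HOL-Library.Liminf_Limsup" "HOL-Library.Extended_Real"
begin

text \<open>A composition x_1 + ... + x_{m-1} is represented by the list xs = [x_1, ..., x_{m-1}],
  so m = length xs + 1.  Parts are 1-indexed via part.\<close>

definition part :: "nat list \<Rightarrow> nat \<Rightarrow> nat" where
  "part xs i = xs ! (i - 1)"

definition composition_of :: "nat \<Rightarrow> nat list \<Rightarrow> bool" where
  "composition_of g xs \<longleftrightarrow> (\<forall>x\<in>set xs. 0 < x) \<and> sum_list xs = g"

definition is_last_max :: "nat list \<Rightarrow> nat \<Rightarrow> bool" where
  "is_last_max xs l \<longleftrightarrow> 1 \<le> l \<and> l \<le> length xs
     \<and> (\<forall>i. 1 \<le> i \<and> i < l \<longrightarrow> part xs i \<le> part xs l)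
     \<and> (\<forall>i. l < i \<and> i \<le> length xs \<longrightarrow> part xs i < part xs l)"

definition weakly_admissible :: "nat list \<Rightarrow> bool" where
  "weakly_admissible xs \<longleftrightarrow> (\<exists>l. is_last_max xs l
     \<and> (\<forall>i. 1 \<le> i \<and> i \<le> l - 1 \<longrightarrow> part xs l \<le> part xs i + part xs (l - i))
     \<and> (\<forall>i. 1 \<le> i \<and> i \<le> (length xs + 1) - 1 - l \<longrightarrow>
            part xs l \<le> 1 + part xs (l + i) + part xs ((length xs + 1) - i)))"

definition nsg_composition :: "nat list \<Rightarrow> bool" where
  "nsg_composition xs \<longleftrightarrow> (\<forall>x\<in>set xs. 0 < x) \<and>
     (\<forall>s t. 1 \<le> s \<and> 1 \<le> t \<and> s + t < length xs + 1 \<longrightarrow>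
        part xs (s + t) \<le> part xs s + part xs t \<and>
        part xs ((length xs + 1) - s - t) \<le> part xs ((length xs + 1) - s) + part xs ((length xs + 1) - t) + 1)"

definition growth_rate :: "(nat \<Rightarrow> nat) \<Rightarrow> ereal" where
  "growth_rate a = limsup (\<lambda>g. ereal (root g (real (a g))))"

definition w_count :: "nat \<Rightarrow> nat" where
  "w_count g = card {xs. composition_of g xs \<and> weakly_admissible xs \<and> xs \<noteq> [] \<and> Max (set xs) \<ge> 6}"

definition nsg_count :: "nat \<Rightarrow> nat" where
  "nsg_count g = card {xs. composition_of g xs \<and> nsg_composition xs \<and> xs \<noteq> [] \<and> Max (set xs) \<ge> 6}"

end

theory Submission
  imports Defs
begin



definition zz :: real where "zz = 31/50"

definition vl :: "nat \<Rightarrow> nat list \<Rightarrow> bool" where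
  "vl d p \<longleftrightarrow> (\<forall>x\<in>set p. 1 \<le> x \<and> x \<le> d) \<and> (\<forall>i<length p. d \<le> p!i + p!(length p - 1 - i))"

definition VV :: "nat \<Rightarrow> nat \<Rightarrow> nat list set" where
  "VV d n = {p. vl d p \<and> length p = n}"

definition sig :: "nat \<Rightarrow> nat \<Rightarrow> real" where
  "sig d n = (\<Sum>p\<in>VV d n. zz ^ sum_list p)"

definition PP :: "nat \<Rightarrow> (nat\<times>nat) set" where
  "PP d = {x\<in>{1..d}\<times>{1..d}. d \<le> fst x + snd x}"

lemma finite_VV: "finite (VV d n)"
proof -
  have "VV d n \<subseteq> {xs. set xs \<subseteq> {1..d} \<and> length xs = n}"
    unfolding VV_def vl_def by auto
  moreover have "finite {xs. set xs \<subseteq> {1..d::nat} \<and> length xs = n}"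
    by (rule finite_lists_length_eq) simp
  ultimately show ?thesis by (rule finite_subset)
qed

lemma finite_PP: "finite (PP d)" unfolding PP_def by auto

lemma geo_bound:
  fixes A :: "nat set" assumes "finite A"
  shows "(\<Sum>j\<in>A. zz ^ j) \<le> 50/19"
proof -
  have "A \<subseteq> {..<Suc (Max (insert 0 A))}" using assms
    by (auto simp: less_Suc_eq_le)
  hence "(\<Sum>j\<in>A. zz ^ j) \<le> (\<Sum>j<Suc (Max (insert 0 A)). zz ^ j)"
    by (intro sum_mono2) (auto simp: zz_def)
  also have "\<dots> = (1 - zz ^ Suc (Max (insert 0 A))) / (1 - zz)"
    by (subst sum_gp_strict) (simp add: zz_def)
  also have "\<dots> \<le> 1 / (1 - zz)"
    by (intro divide_right_mono) (auto simp: zz_def)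
  also have "\<dots> = 50/19" by (simp add: zz_def)
  finally show ?thesis .
qed

lemma VV_Suc2:
  assumes "p \<in> VV d (Suc (Suc n))"
  shows "p \<in> (\<lambda>((a,b),m). a # m @ [b]) ` (PP d \<times> VV d n)"
proof -
  from assms have vp: "vl d p" and lp: "length p = Suc (Suc n)" unfolding VV_def by auto
  then obtain a r where pr: "p = a # r" by (cases p) auto
  with lp obtain m b where rm: "r = m @ [b]" by (cases r rule: rev_exhaust) auto
  have p: "p = a # m @ [b]" using pr rm by simp
  have lm: "length m = n" using lp p by simp
  have ab: "(a,b) \<in> PP d"
  proof -
    have "d \<le> p!0 + p!(length p - 1 - 0)" using vp lp unfolding vl_def by auto
    hence "d \<le> a + b" using p lm by (simp add: nth_append)
    moreover have "a \<in> set p" "b \<in> set p" using p by auto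
    ultimately show ?thesis using vp unfolding vl_def PP_def by auto
  qed
  have "vl d m" unfolding vl_def
  proof (intro conjI ballI allI impI)
    fix x assume "x \<in> set m" thus "1 \<le> x" "x \<le> d" using vp p unfolding vl_def by auto
  next
    fix i assume i: "i < length m"
    have h: "\<forall>j<length p. d \<le> p!j + p!(length p - 1 - j)" using vp unfolding vl_def by auto
    have "d \<le> p!(Suc i) + p!(length p - 1 - Suc i)" using h[rule_format, of "Suc i"] lp i lm by simp
    moreover have "p!(Suc i) = m!i" using p i by (simp add: nth_append)
    moreover have "length p - 1 - Suc i = Suc (length m - 1 - i)" using lp lm i by simp
    moreover have "length m - 1 - i < length m" using i by simp
    hence "p!(Suc (length m - 1 - i)) = m!(length m - 1 - i)" using p by (simp add: nth_append)
    ultimately show "d \<le> m ! i + m ! (length m - 1 - i)" by simp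
  qed
  with lm have "m \<in> VV d n" unfolding VV_def by auto
  with ab p show ?thesis by force
qed

lemma sig_Suc2: "sig d (Suc (Suc n)) \<le> (\<Sum>x\<in>PP d. zz ^ (fst x + snd x)) * sig d n"
proof -
  let ?f = "\<lambda>((a,b),m). a # m @ [b]"
  have "sig d (Suc (Suc n)) \<le> (\<Sum>p\<in>?f ` (PP d \<times> VV d n). zz ^ sum_list p)"
    unfolding sig_def using VV_Suc2
    by (intro sum_mono2) (auto simp: finite_VV finite_PP zz_def)
  also have "\<dots> \<le> (\<Sum>x\<in>PP d \<times> VV d n. zz ^ sum_list (?f x))"
    using sum_image_le[of "PP d \<times> VV d n" "\<lambda>p. zz ^ sum_list p" ?f]
    by (auto simp: finite_VV finite_PP zz_def o_def)
  also have "\<dots> = (\<Sum>x\<in>PP d \<times> VV d n. zz ^ (fst (fst x) + snd (fst x)) * zz ^ sum_list (snd x))"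
    by (intro sum.cong) (auto simp: power_add algebra_simps)
  also have "\<dots> = (\<Sum>x\<in>PP d. zz ^ (fst x + snd x)) * sig d n"
    unfolding sig_def sum_product sum.cartesian_product by (simp add: case_prod_beta)
  finally show ?thesis .
qed




lemma PP_sum: "(\<Sum>x\<in>PP d. zz ^ (fst x + snd x)) = (\<Sum>a\<in>{1..d}. \<Sum>b\<in>{1..d}. if d \<le> a + b then zz^(a+b) else 0)"
  unfolding PP_def by (simp add: sum.inter_filter sum.cartesian_product case_prod_beta)

lemma PP5: "(\<Sum>x\<in>PP 5. zz ^ (fst x + snd x)) \<le> 9/10"
proof -
  have e: "{1..5::nat} = {1,2,3,4,5}" by auto
  have "(\<Sum>x\<in>PP 5. zz ^ (fst x + snd x)) = 4*zz^5 + 5*zz^6+4*zz^7+3*zz^8+2*zz^9+zz^10"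
    unfolding PP_sum e by simp
  also have "\<dots> \<le> 9/10" by (simp add: zz_def power_divide)
  finally show ?thesis .
qed




lemma inner_bound:
  assumes "a \<le> d"
  shows "(\<Sum>b\<in>{1..d}. if d \<le> a + b then zz^(a+b) else 0) \<le> zz^d * (50/19)"
proof -
  let ?B = "{b\<in>{1..d}. d \<le> a + b}"
  have "(\<Sum>b\<in>{1..d}. if d \<le> a + b then zz^(a+b) else 0) = (\<Sum>b\<in>?B. zz^(a+b))"
    by (rule sum.inter_filter[symmetric]) simp
  also have "\<dots> = (\<Sum>b\<in>?B. zz^d * zz^(a+b-d))"
    by (intro sum.cong) (auto simp: power_add[symmetric])
  also have "\<dots> = zz^d * (\<Sum>b\<in>?B. zz^(a+b-d))" by (simp add: sum_distrib_left)
  also have "(\<Sum>b\<in>?B. zz^(a+b-d)) = (\<Sum>j\<in>(\<lambda>b. a+b-d) ` ?B. zz^j)"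
    by (subst sum.reindex) (auto simp: inj_on_def)
  also have "\<dots> \<le> 50/19" by (rule geo_bound) auto
  finally show ?thesis by (simp add: zz_def)
qed

lemma dpow: "6 \<le> d \<Longrightarrow> real d * zz^d \<le> 6 * zz^6"
proof (induction d rule: dec_induct)
  case base then show ?case by simp
next
  case (step n)
  have "real (Suc n) * zz^Suc n = (real (Suc n) * zz) * zz^n" by simp
  also have "\<dots> \<le> real n * zz^n"
    using step(1) by (intro mult_right_mono) (auto simp: zz_def)
  finally show ?case using step(3) by linarith
qed

lemma PP_bound: assumes "5 \<le> d" shows "(\<Sum>x\<in>PP d. zz ^ (fst x + snd x)) \<le> 9/10"
proof (cases "d = 5")
  case True thus ?thesis using PP5 by simp
next
  case False
  hence d6: "6 \<le> d" using assms by simp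
  have "(\<Sum>x\<in>PP d. zz ^ (fst x + snd x)) \<le> (\<Sum>a\<in>{1..d}. zz^d * (50/19))"
    unfolding PP_sum by (intro sum_mono inner_bound) auto
  also have "\<dots> = real d * zz^d * (50/19)" by simp
  also have "\<dots> \<le> 6 * zz^6 * (50/19)" using dpow[OF d6] by simp
  also have "\<dots> \<le> 9/10" by (simp add: zz_def power_divide)
  finally show ?thesis .
qed

lemma sig_bound: "5 \<le> d \<Longrightarrow> sig d n \<le> 3 * (19/20)^n"
proof (induction n rule: less_induct)
  case (less n)
  show ?case
  proof (cases n)
    case 0
    have "VV d 0 = {[]}" unfolding VV_def vl_def by auto
    thus ?thesis using 0 by (simp add: sig_def)
  next
    case (Suc k)
    show ?thesis
    proof (cases k)
      case 0
      have "VV d 1 \<subseteq> (\<lambda>a. [a]) ` {1..d}"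
        unfolding VV_def vl_def by (auto simp: length_Suc_conv)
      hence "sig d 1 \<le> (\<Sum>p\<in>(\<lambda>a. [a]) ` {1..d}. zz ^ sum_list p)"
        unfolding sig_def by (intro sum_mono2) (auto simp: zz_def)
      also have "\<dots> = (\<Sum>a\<in>{1..d}. zz^a)" by (subst sum.reindex) (auto simp: inj_on_def)
      also have "\<dots> \<le> 50/19" by (rule geo_bound) auto
      finally show ?thesis using Suc 0 by simp
    next
      case (Suc j)
      have sn: "0 \<le> sig d j" unfolding sig_def by (intro sum_nonneg) (auto simp: zz_def)
      have "sig d n \<le> (\<Sum>x\<in>PP d. zz ^ (fst x + snd x)) * sig d j"
        using sig_Suc2 \<open>n = Suc k\<close> Suc by simp
      also have "\<dots> \<le> 9/10 * sig d j"
        by (intro mult_right_mono PP_bound sn less.prems)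
      also have "\<dots> \<le> 9/10 * (3 * (19/20)^j)"
        using less.IH[of j] less.prems \<open>n = Suc k\<close> Suc by simp
      also have "\<dots> \<le> 3 * (19/20)^n" using \<open>n = Suc k\<close> Suc by simp
      finally show ?thesis .
    qed
  qed
qed

definition WW :: "nat \<Rightarrow> nat \<Rightarrow> nat list set" where
  "WW d g = {p. vl d p \<and> length p \<le> g}"

lemma WW_eq: "WW d g = (\<Union>n\<in>{..g}. VV d n)"
  unfolding WW_def VV_def by auto

lemma finite_WW: "finite (WW d g)" unfolding WW_eq by (auto simp: finite_VV)

lemma WW_bound: assumes "5 \<le> d" shows "(\<Sum>p\<in>WW d g. zz ^ sum_list p) \<le> 60"
proof -
  have "(\<Sum>p\<in>WW d g. zz ^ sum_list p) = (\<Sum>n\<in>{..g}. sig d n)"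
    unfolding WW_eq sig_def
    using finite_VV[unfolded VV_def]
    by (intro sum.UNION_disjoint) (auto simp: VV_def)
  also have "\<dots> \<le> (\<Sum>n\<in>{..g}. 3 * (19/20)^n)"
    by (intro sum_mono sig_bound assms)
  also have "\<dots> = 3 * (\<Sum>n<Suc g. (19/20::real)^n)"
    by (simp add: sum_distrib_left lessThan_Suc_atMost)
  also have "\<dots> = 3 * ((1 - (19/20)^Suc g) / (1 - 19/20))"
    by (subst sum_gp_strict) simp
  also have "\<dots> \<le> 60" by simp
  finally show ?thesis .
qed




lemma len_le_sum: "(\<forall>x\<in>set xs. (0::nat) < x) \<Longrightarrow> length xs \<le> sum_list xs"
  by (induction xs) auto

lemma decomp2:
  assumes c: "composition_of g xs" and wa: "weakly_admissible xs" and ne: "xs \<noteq> []"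
  shows "\<exists>k p q. Max (set xs) = k \<and> k \<le> g \<and> p \<in> WW k g \<and> q \<in> WW (k-1) g \<and> xs = p @ k # q"
proof -
  obtain l where lm: "is_last_max xs l"
    and A: "\<forall>i. 1 \<le> i \<and> i \<le> l - 1 \<longrightarrow> part xs l \<le> part xs i + part xs (l - i)"
    and B: "\<forall>i. 1 \<le> i \<and> i \<le> (length xs + 1) - 1 - l \<longrightarrow>
            part xs l \<le> 1 + part xs (l + i) + part xs ((length xs + 1) - i)"
    using wa unfolding weakly_admissible_def by blast
  define n where "n = length xs"
  define k where "k = xs!(l-1)"
  have l1: "1 \<le> l" "l \<le> n" using lm unfolding is_last_max_def n_def by auto
  have pl: "part xs l = k" unfolding part_def k_def by simp
  have pos: "\<forall>x\<in>set xs. 0 < x" "sum_list xs = g" using c unfolding composition_of_def by auto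
  have le: "xs!j \<le> k" if "j < n" for j
  proof -
    consider "Suc j < l" | "Suc j = l" | "l < Suc j" by linarith
    thus ?thesis
    proof cases
      case 1 thus ?thesis using lm that unfolding is_last_max_def part_def k_def n_def
        by (metis diff_Suc_1 le_add1 plus_1_eq_Suc)
    next
      case 2 thus ?thesis unfolding k_def by auto
    next
      case 3 thus ?thesis using lm that unfolding is_last_max_def part_def k_def n_def
        by (metis Suc_leI diff_Suc_1 less_imp_le)
    qed
  qed
  have lt: "xs!j < k" if "l \<le> j" "j < n" for j
    using lm that unfolding is_last_max_def part_def k_def n_def
    by (metis Suc_le_eq diff_Suc_1 le_imp_less_Suc)
  have kin: "k \<in> set xs" unfolding k_def using l1 n_def by auto
  have mx: "Max (set xs) = k"
    apply (rule Max_eqI)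
      apply simp
     apply (auto simp: in_set_conv_nth n_def le)[1]
    apply (rule kin)
    done
  have kg: "k \<le> g" using member_le_sum_list[OF kin] pos by simp
  have ng: "n \<le> g" using len_le_sum[OF pos(1)] pos n_def by simp
  have split: "xs = take (l-1) xs @ k # drop l xs"
    using id_take_nth_drop[of "l-1" xs] l1 n_def k_def by simp
  have vp: "vl k (take (l-1) xs)" unfolding vl_def
  proof (intro conjI ballI allI impI)
    fix x assume "x \<in> set (take (l-1) xs)"
    hence "x \<in> set xs" by (meson in_set_takeD)
    then show "1 \<le> x" using pos(1) by (simp add: Suc_le_eq)
    from \<open>x \<in> set xs\<close> show "x \<le> k" using le by (auto simp: in_set_conv_nth n_def)
  next
    fix i assume i: "i < length (take (l - 1) xs)"
    hence i2: "i < l - 1" using l1 n_def by simp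
    have "k \<le> part xs (Suc i) + part xs (l - Suc i)" using A[rule_format, of "Suc i"] i2 pl by simp
    moreover have "part xs (Suc i) = take (l-1) xs ! i" using i2 by (simp add: part_def)
    moreover have "part xs (l - Suc i) = take (l-1) xs ! (length (take (l - 1) xs) - 1 - i)"
      using i2 l1 n_def by (simp add: part_def)
    ultimately show "k \<le> take (l - 1) xs ! i + take (l - 1) xs ! (length (take (l - 1) xs) - 1 - i)"
      by simp
  qed
  have vq: "vl (k-1) (drop l xs)" unfolding vl_def
  proof (intro conjI ballI allI impI)
    fix x assume "x \<in> set (drop l xs)"
    then obtain j where j: "j < n - l" "x = xs!(l+j)" by (auto simp: in_set_conv_nth n_def)
    have jl: "l + j < length xs" using j n_def by simp
    hence "xs!(l+j) \<in> set xs" by simp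
    hence "0 < xs!(l+j)" using pos(1) by blast
    moreover have "xs!(l+j) < k" using lt[of "l+j"] jl n_def by simp
    ultimately show "1 \<le> x" "x \<le> k - 1" using j by auto
  next
    fix i assume i: "i < length (drop l xs)"
    hence i2: "i < n - l" using n_def by simp
    have "k \<le> 1 + part xs (l + Suc i) + part xs ((length xs + 1) - Suc i)"
      using B[rule_format, of "Suc i"] i2 pl n_def by simp
    moreover have "part xs (l + Suc i) = drop l xs ! i" using i2 n_def by (simp add: part_def)
    moreover have "part xs ((length xs + 1) - Suc i) = drop l xs ! (length (drop l xs) - 1 - i)"
      using i2 l1 n_def by (simp add: part_def)
    ultimately show "k - 1 \<le> drop l xs ! i + drop l xs ! (length (drop l xs) - 1 - i)"
      by simp
  qed
  have "take (l-1) xs \<in> WW k g" using vp ng n_def unfolding WW_def by simp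
  moreover have "drop l xs \<in> WW (k-1) g" using vq ng n_def unfolding WW_def by simp
  ultimately show ?thesis using mx kg split by blast
qed




definition SS :: "nat \<Rightarrow> nat list set" where
  "SS g = {xs. composition_of g xs \<and> weakly_admissible xs \<and> xs \<noteq> [] \<and> Max (set xs) \<ge> 6}"

lemma finite_SS: "finite (SS g)"
proof -
  have "SS g \<subseteq> {xs. set xs \<subseteq> {0..g} \<and> length xs \<le> g}"
  proof
    fix xs assume "xs \<in> SS g"
    hence c: "(\<forall>x\<in>set xs. 0 < x)" "sum_list xs = g" unfolding SS_def composition_of_def by auto
    have "set xs \<subseteq> {0..g}" using member_le_sum_list c(2) by fastforce
    moreover have "length xs \<le> g" using len_le_sum[OF c(1)] c(2) by simp
    ultimately show "xs \<in> {xs. set xs \<subseteq> {0..g} \<and> length xs \<le> g}" by simp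
  qed
  moreover have "finite {xs. set xs \<subseteq> {0..g} \<and> length xs \<le> g}"
    by (rule finite_lists_length_le) simp
  ultimately show ?thesis by (rule finite_subset)
qed

lemma w_weighted: "real (w_count g) * zz^g \<le> 3600 * (50/19)"
proof -
  let ?f = "\<lambda>(k,(p,q)). p @ k # (q::nat list)"
  let ?D = "Sigma {6..g} (\<lambda>k. WW k g \<times> WW (k-1) g)"
  have fD: "finite ?D" by (auto simp: finite_WW)
  have z0: "0 \<le> zz" by (simp add: zz_def)
  have "real (w_count g) * zz^g = (\<Sum>xs\<in>SS g. zz ^ sum_list xs)"
    unfolding w_count_def SS_def[symmetric]
    by (simp add: SS_def composition_of_def)
  also have "\<dots> \<le> (\<Sum>xs\<in>?f ` ?D. zz ^ sum_list xs)"
  proof (intro sum_mono2)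
    show "finite (?f ` ?D)" using fD by simp
    show "SS g \<subseteq> ?f ` ?D"
    proof
      fix xs assume "xs \<in> SS g"
      hence a: "composition_of g xs" "weakly_admissible xs" "xs \<noteq> []" "Max (set xs) \<ge> 6"
        unfolding SS_def by auto
      obtain k p q where "Max (set xs) = k" "k \<le> g" "p \<in> WW k g" "q \<in> WW (k-1) g" "xs = p @ k # q"
        using decomp2[OF a(1-3)] by blast
      with a(4) have "(k,(p,q)) \<in> ?D" "xs = ?f (k,(p,q))" by auto
      thus "xs \<in> ?f ` ?D" by blast
    qed
  qed (simp add: z0)
  also have "\<dots> \<le> (\<Sum>x\<in>?D. zz ^ sum_list (?f x))"
    using sum_image_le[of ?D "\<lambda>xs. zz ^ sum_list xs" ?f] fD z0 by (simp add: o_def)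
  also have "\<dots> = (\<Sum>(k,x)\<in>?D. zz^k * (zz ^ sum_list (fst x) * zz ^ sum_list (snd x)))"
    by (intro sum.cong) (auto simp: power_add)
  also have "\<dots> = (\<Sum>k\<in>{6..g}. \<Sum>x\<in>WW k g \<times> WW (k-1) g. zz^k * (zz ^ sum_list (fst x) * zz ^ sum_list (snd x)))"
    by (rule sum.Sigma[symmetric]) (auto simp: finite_WW)
  also have "\<dots> = (\<Sum>k\<in>{6..g}. zz^k * ((\<Sum>p\<in>WW k g. zz ^ sum_list p) * (\<Sum>q\<in>WW (k-1) g. zz ^ sum_list q)))"
    unfolding sum_product sum.cartesian_product by (simp add: case_prod_beta sum_distrib_left)
  also have "\<dots> \<le> (\<Sum>k\<in>{6..g}. zz^k * (60 * 60))"
  proof (intro sum_mono mult_left_mono)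
    fix k assume k: "k \<in> {6..g}"
    have a: "0 \<le> (\<Sum>p\<in>WW k g. zz ^ sum_list p)" by (intro sum_nonneg) (simp add: z0)
    show "(\<Sum>p\<in>WW k g. zz ^ sum_list p) * (\<Sum>q\<in>WW (k-1) g. zz ^ sum_list q) \<le> 60 * 60"
      using k by (intro mult_mono WW_bound a) (auto intro!: sum_nonneg simp: z0)
  qed (simp add: z0)
  also have "\<dots> = 3600 * (\<Sum>k\<in>{6..g}. zz^k)" by (subst sum_distrib_left) (rule sum.cong, auto)
  also have "\<dots> \<le> 3600 * (50/19)" by (intro mult_left_mono geo_bound) auto
  finally show ?thesis .
qed

lemma w_bound: "real (w_count g) \<le> (3600 * (50/19)) * (50/31)^g"
proof -
  have "real (w_count g) = real (w_count g) * zz^g * (50/31)^g"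
    by (simp add: zz_def power_mult_distrib[symmetric])
  also have "\<dots> \<le> (3600 * (50/19)) * (50/31)^g"
    by (intro mult_right_mono w_weighted) simp
  finally show ?thesis .
qed

lemma root_lim: fixes C \<rho> :: real assumes "0 < C" shows "((\<lambda>n. root n C * \<rho>) \<longlongrightarrow> \<rho>) sequentially"
proof -
  note t = tendsto_mult[OF LIMSEQ_root_const[OF assms] tendsto_const[of \<rho>]]
  show ?thesis using t by simp
qed

lemma growth_le:
  fixes a :: "nat \<Rightarrow> nat" and C \<rho> :: real
  assumes "\<And>g. real (a g) \<le> C * \<rho>^g" "0 < C" "0 < \<rho>"
  shows "growth_rate a \<le> ereal \<rho>"
proof -
  have ev: "eventually (\<lambda>n. ereal (root n (real (a n))) \<le> ereal (root n C * \<rho>)) sequentially"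
    using eventually_gt_at_top[of 0]
  proof eventually_elim
    case (elim n)
    have "root n (real (a n)) \<le> root n (C * \<rho>^n)" by (intro real_root_le_mono elim assms)
    also have "\<dots> = root n C * \<rho>" using elim assms by (simp add: real_root_mult real_root_power_cancel)
    finally show ?case by simp
  qed
  have t0: "((\<lambda>n. root n C * \<rho>) \<longlongrightarrow> \<rho>) sequentially"
    by (rule root_lim[OF assms(2)])
  hence t: "((\<lambda>n. ereal (root n C * \<rho>)) \<longlongrightarrow> ereal \<rho>) sequentially" by simp
  have "growth_rate a \<le> limsup (\<lambda>n. ereal (root n C * \<rho>))"
    unfolding growth_rate_def by (rule Limsup_mono[OF ev])
  also have "\<dots> = ereal \<rho>" by (rule lim_imp_Limsup) (use t0 in auto)
  finally show ?thesis .
qed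

lemma golden: "50/31 < (1 + sqrt 5) / 2"
proof -
  have "69/31 < sqrt 5" by (rule real_less_rsqrt) (simp add: power_divide)
  thus ?thesis by simp
qed

lemma nsg_wa:
  assumes ne: "xs \<noteq> []" and ns: "nsg_composition xs"
  shows "weakly_admissible xs"
proof -
  define n where "n = length xs"
  define M where "M = Max (set xs)"
  define L where "L = {i. 1 \<le> i \<and> i \<le> n \<and> part xs i = M}"
  define l where "l = Max L"
  have partin: "part xs i \<in> set xs" if "1 \<le> i" "i \<le> n" for i
    using that unfolding part_def n_def by auto
  have partle: "part xs i \<le> M" if "1 \<le> i" "i \<le> n" for i
    using partin[OF that] unfolding M_def by simp
  have fL: "finite L" unfolding L_def by auto
  have "M \<in> set xs" unfolding M_def using ne by simp
  then obtain j where j: "j < n" "xs!j = M" unfolding n_def by (auto simp: in_set_conv_nth)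
  have "Suc j \<in> L" unfolding L_def part_def using j by simp
  hence Lne: "L \<noteq> {}" by blast
  have lL: "l \<in> L" unfolding l_def using fL Lne by simp
  hence l1: "1 \<le> l" "l \<le> n" and pl: "part xs l = M" unfolding L_def by auto
  have ilm: "is_last_max xs l" unfolding is_last_max_def
  proof (intro conjI allI impI)
    show "1 \<le> l" "l \<le> length xs" using l1 n_def by auto
  next
    fix i assume "1 \<le> i \<and> i < l" thus "part xs i \<le> part xs l" using pl partle l1 by auto
  next
    fix i assume i: "l < i \<and> i \<le> length xs"
    have "i \<notin> L" using i fL unfolding l_def using Max_ge leD by blast
    hence "part xs i \<noteq> M" using i l1 unfolding L_def n_def by auto
    thus "part xs i < part xs l" using pl partle[of i] i l1 n_def by fastforce
  qed
  have C: "\<And>s t. 1 \<le> s \<Longrightarrow> 1 \<le> t \<Longrightarrow> s + t < n + 1 \<Longrightarrow>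
        part xs (s + t) \<le> part xs s + part xs t \<and>
        part xs ((n + 1) - s - t) \<le> part xs ((n + 1) - s) + part xs ((n + 1) - t) + 1"
    using ns unfolding nsg_composition_def n_def by blast
  show ?thesis unfolding weakly_admissible_def
  proof (intro exI conjI allI impI)
    show "is_last_max xs l" by (rule ilm)
  next
    fix i assume i: "1 \<le> i \<and> i \<le> l - 1"
    have "part xs (i + (l - i)) \<le> part xs i + part xs (l - i)"
      using C[of i "l - i"] i l1 by auto
    moreover have "i + (l - i) = l" using i by arith
    ultimately show "part xs l \<le> part xs i + part xs (l - i)" by simp
  next
    fix i assume i: "1 \<le> i \<and> i \<le> (length xs + 1) - 1 - l"
    have "part xs ((n + 1) - (n + 1 - l - i) - i) \<le> part xs ((n + 1) - (n + 1 - l - i)) + part xs ((n + 1) - i) + 1"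
      using C[of "n + 1 - l - i" i] i l1 n_def by auto
    moreover have "(n + 1) - (n + 1 - l - i) - i = l" "(n + 1) - (n + 1 - l - i) = l + i"
      using i l1 n_def by auto
    ultimately show "part xs l \<le> 1 + part xs (l + i) + part xs ((length xs + 1) - i)"
      using n_def by simp
  qed
qed

lemma nsg_le_w: "nsg_count g \<le> w_count g"
  unfolding nsg_count_def w_count_def SS_def[symmetric]
proof (rule card_mono[OF finite_SS])
  show "{xs. composition_of g xs \<and> nsg_composition xs \<and> xs \<noteq> [] \<and> 6 \<le> Max (set xs)} \<subseteq> SS g"
    unfolding SS_def using nsg_wa by blast
qed

theorem proposition10p1:
  shows "growth_rate w_count < ereal ((1 + sqrt 5) / 2)
       \<and> growth_rate nsg_count < ereal ((1 + sqrt 5) / 2)"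
proof -
  have wb: "\<And>g. real (w_count g) \<le> (3600 * (50/19)) * (50/31)^g" by (rule w_bound)
  have nb: "\<And>g. real (nsg_count g) \<le> (3600 * (50/19)) * (50/31)^g"
  proof -
    fix g
    have "real (nsg_count g) \<le> real (w_count g)" using nsg_le_w[of g] by simp
    also have "\<dots> \<le> (3600 * (50/19)) * (50/31)^g" by (rule wb)
    finally show "real (nsg_count g) \<le> (3600 * (50/19)) * (50/31)^g" .
  qed
  have "growth_rate w_count \<le> ereal (50/31)" by (rule growth_le[OF wb]) auto
  moreover have "growth_rate nsg_count \<le> ereal (50/31)" by (rule growth_le[OF nb]) auto
  moreover have "ereal (50/31) < ereal ((1 + sqrt 5) / 2)" using golden by simp
  ultimately show ?thesis by (meson le_less_trans)
qed


end
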